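(* Let $D(\theta,\gamma_1,\gamma_2)$ be an adaptive estimating function on the model $\mathcal{M}$ such that, for every $\mathbb{P}\in\mathcal{M}$, $D\{\theta(\mathbb{P}),\gamma_1(\mathbb{P}),\gamma_2(\mathbb{P})\}$ is an influence curve of $\theta$ at $\mathbb{P}$ relative to $\mathcal{M}$. Suppose that for every $\mathbb{P}\in\mathcal{M}$ the sections $\mathcal{M}_1(\mathbb{P})$ and $\mathcal{M}_2(\mathbb{P})$ are convex (and their elements are mutually absolutely continuous with square-integrable likelihood ratios). Then $D$ is doubly robust.
   Context: $X$ is a random element; $\mathcal{M}$ is a set of laws of $X$. $\theta:\mathcal{M}\to\mathbb{R}^k$ is the parameter of interest and $\gamma(\mathbb{P})=(\gamma_1(\mathbb{P}),\gamma_2(\mathbb{P}))$ a parameterization of nuisance functions; $(\theta(\mathbb{P}),\gamma_1(\mathbb{P}),\gamma_2(\mathbb{P}))$ is variation independent. An (adaptive) estimating function is a function $D(\theta,\gamma)=D(X;\theta,\gamma_1,\gamma_2)$ such that for every $\mathbb{P}\in\mathcal{M}$: $\mathbb{E}_{\mathbb{P}}[D\{\theta(\mathbb{P}),\gamma(\mathbb{P})\}]=0$; $\mathbb{E}_{\mathbb{P}}[D\{\theta',\gamma(\mathbb{P})\}]\neq0$ for $\theta'\neq\theta(\mathbb{P})$ near $\theta(\mathbb{P})$; and $\mathbb{E}_{\mathbb{P}}[D\{\theta,\gamma(\mathbb{P}')\}^2]<\infty$. It is doubly robust if for every $\mathbb{P}\in\mathcal{M}$ and all values $\gamma_1,\gamma_2$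 in the ranges of $\gamma_1(\cdot),\gamma_2(\cdot)$: $\mathbb{E}_{\mathbb{P}}[D\{\theta(\mathbb{P}),\gamma_1(\mathbb{P}),\gamma_2\}]=\mathbb{E}_{\mathbb{P}}[D\{\theta(\mathbb{P}),\gamma_1,\gamma_2(\mathbb{P})\}]=0$. Sections: $\mathcal{M}_1(\mathbb{P})=\{\mathbb{P}'\in\mathcal{M}:\theta(\mathbb{P}')=\theta(\mathbb{P}),\ \gamma_2(\mathbb{P}')=\gamma_2(\mathbb{P})\}$, $\mathcal{M}_2(\mathbb{P})=\{\mathbb{P}'\in\mathcal{M}:\theta(\mathbb{P}')=\theta(\mathbb{P}),\ \gamma_1(\mathbb{P}')=\gamma_1(\mathbb{P})\}$. An influence curve of $\theta$ at $\mathbb{P}$ relative to $\mathcal{M}$ is an $\mathrm{IC}(\mathbb{P})\in L_0^2(\mathbb{P})$ such that for every regular (quadratic-mean differentiable) parametric submodel $\{\mathbb{P}_t\}\subset\mathcal{M}$ with $\mathbb{P}_0=\mathbb{P}$ and score $S$, $\frac{d}{dt}\theta(\mathbb{P}_t)\big|_{t=0}=\mathbb{E}_{\mathbb{P}}[\mathrm{IC}(\mathbb{P})S(X)]$. *)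

theory Defs
  imports "HOL-Probability.Probability"
begin

text \<open>Laws are probability measures of type 'x measure; the model is a set of such
measures on a common measurable space.\<close>

definition variation_independent ::
  "'x measure set \<Rightarrow> ('x measure \<Rightarrow> real^'k) \<Rightarrow> ('x measure \<Rightarrow> 'a) \<Rightarrow> ('x measure \<Rightarrow> 'b) \<Rightarrow> bool" where
  "variation_independent M \<theta> \<gamma>1 \<gamma>2 \<longleftrightarrow>
     (\<forall>P1\<in>M. \<forall>P2\<in>M. \<forall>P3\<in>M. \<exists>P\<in>M. \<theta> P = \<theta> P1 \<and> \<gamma>1 P = \<gamma>1 P2 \<and> \<gamma>2 P = \<gamma>2 P3)"

definition estimating_function ::
  "'x measure set \<Rightarrow> ('x measure \<Rightarrow> real^'k) \<Rightarrow> ('x measure \<Rightarrow> 'a) \<Rightarrow> ('x measure \<Rightarrow> 'b)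
    \<Rightarrow> ('x \<Rightarrow> real^'k \<Rightarrow> 'a \<Rightarrow> 'b \<Rightarrow> real^'k) \<Rightarrow> bool" where
  "estimating_function M \<theta> \<gamma>1 \<gamma>2 D \<longleftrightarrow>
     (\<forall>P\<in>M.
        (\<integral>x. D x (\<theta> P) (\<gamma>1 P) (\<gamma>2 P) \<partial>P) = 0 \<and>
        (\<exists>e>0. \<forall>\<theta>'. \<theta>' \<noteq> \<theta> P \<and> dist \<theta>' (\<theta> P) < e \<longrightarrow>
                   (\<integral>x. D x \<theta>' (\<gamma>1 P) (\<gamma>2 P) \<partial>P) \<noteq> 0) \<and>
        (\<forall>\<theta>'. \<forall>P'\<in>M. (\<lambda>x. D x \<theta>' (\<gamma>1 P') (\<gamma>2 P')) \<in> borel_measurable P \<and>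
                      integrable P (\<lambda>x. (norm (D x \<theta>' (\<gamma>1 P') (\<gamma>2 P')))\<^sup>2)))"

definition doubly_robust ::
  "'x measure set \<Rightarrow> ('x measure \<Rightarrow> real^'k) \<Rightarrow> ('x measure \<Rightarrow> 'a) \<Rightarrow> ('x measure \<Rightarrow> 'b)
    \<Rightarrow> ('x \<Rightarrow> real^'k \<Rightarrow> 'a \<Rightarrow> 'b \<Rightarrow> real^'k) \<Rightarrow> bool" where
  "doubly_robust M \<theta> \<gamma>1 \<gamma>2 D \<longleftrightarrow>
     estimating_function M \<theta> \<gamma>1 \<gamma>2 D \<and>
     (\<forall>P\<in>M. \<forall>g1\<in>\<gamma>1 ` M. \<forall>g2\<in>\<gamma>2 ` M.
        (\<integral>x. D x (\<theta> P) (\<gamma>1 P) g2 \<partial>P) = 0 \<and> (\<integral>x. D x (\<theta> P) g1 (\<gamma>2 P) \<partial>P) = 0)"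

definition section1 ::
  "'x measure set \<Rightarrow> ('x measure \<Rightarrow> real^'k) \<Rightarrow> ('x measure \<Rightarrow> 'b) \<Rightarrow> 'x measure \<Rightarrow> 'x measure set" where
  "section1 M \<theta> \<gamma>2 P = {P'\<in>M. \<theta> P' = \<theta> P \<and> \<gamma>2 P' = \<gamma>2 P}"

definition section2 ::
  "'x measure set \<Rightarrow> ('x measure \<Rightarrow> real^'k) \<Rightarrow> ('x measure \<Rightarrow> 'a) \<Rightarrow> 'x measure \<Rightarrow> 'x measure set" where
  "section2 M \<theta> \<gamma>1 P = {P'\<in>M. \<theta> P' = \<theta> P \<and> \<gamma>1 P' = \<gamma>1 P}"

definition mixture :: "real \<Rightarrow> 'x measure \<Rightarrow> 'x measure \<Rightarrow> 'x measure" where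
  "mixture t P1 P2 = measure_of (space P1) (sets P1)
     (\<lambda>A. ennreal (1 - t) * emeasure P1 A + ennreal t * emeasure P2 A)"

definition convex_measures :: "'x measure set \<Rightarrow> bool" where
  "convex_measures S \<longleftrightarrow> (\<forall>P1\<in>S. \<forall>P2\<in>S. \<forall>t\<in>{0..1::real}. mixture t P1 P2 \<in> S)"

text \<open>Elements mutually absolutely continuous with square-integrable likelihood ratios;
RN_deriv P1 P2 is dP2/dP1.\<close>
definition mutually_ac_L2 :: "'x measure set \<Rightarrow> bool" where
  "mutually_ac_L2 S \<longleftrightarrow> (\<forall>P1\<in>S. \<forall>P2\<in>S. absolutely_continuous P1 P2 \<and>
       integrable P1 (\<lambda>x. (enn2real (RN_deriv P1 P2 x))\<^sup>2))"

text \<open>Regular (quadratic-mean differentiable) one-dimensional submodel t \<mapsto> Pt t,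
t \<in> [0,e], through P = Pt 0, with score S.\<close>
definition qmd_submodel :: "'x measure \<Rightarrow> (real \<Rightarrow> 'x measure) \<Rightarrow> real \<Rightarrow> ('x \<Rightarrow> real) \<Rightarrow> bool" where
  "qmd_submodel P Pt e S \<longleftrightarrow> 0 < e \<and> Pt 0 = P \<and>
     S \<in> borel_measurable P \<and> integrable P (\<lambda>x. (S x)\<^sup>2) \<and>
     (\<exists>\<mu> p. sigma_finite_measure \<mu> \<and> sets \<mu> = sets P \<and>
        (\<forall>t\<in>{0..e}. p t \<in> borel_measurable \<mu> \<and> (\<forall>x\<in>space \<mu>. 0 \<le> p t x) \<and>
                     Pt t = density \<mu> (\<lambda>x. ennreal (p t x))) \<and>
        (\<forall>\<^sub>F t in at_right 0. integrable \<mu>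
            (\<lambda>x. (sqrt (p t x) - sqrt (p 0 x) - t / 2 * S x * sqrt (p 0 x))\<^sup>2)) \<and>
        ((\<lambda>t. (\<integral>x. (sqrt (p t x) - sqrt (p 0 x) - t / 2 * S x * sqrt (p 0 x))\<^sup>2 \<partial>\<mu>) / t\<^sup>2)
            \<longlongrightarrow> 0) (at_right 0))"

definition influence_curve ::
  "'x measure set \<Rightarrow> ('x measure \<Rightarrow> real^'k) \<Rightarrow> 'x measure \<Rightarrow> ('x \<Rightarrow> real^'k) \<Rightarrow> bool" where
  "influence_curve M \<theta> P IC \<longleftrightarrow>
     IC \<in> borel_measurable P \<and> integrable P (\<lambda>x. (norm (IC x))\<^sup>2) \<and> (\<integral>x. IC x \<partial>P) = 0 \<and>
     (\<forall>Pt e S. qmd_submodel P Pt e S \<and> (\<forall>t\<in>{0..e}. Pt t \<in> M) \<longrightarrow>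
        ((\<lambda>t. \<theta> (Pt t)) has_vector_derivative (\<integral>x. S x *\<^sub>R IC x \<partial>P)) (at 0 within {0..e}))"

end

theory Submission
  imports Defs
begin

lemma sq_ineq:
  fixes u :: real assumes u: "u \<ge> -1"
  shows "(sqrt (1+u) - 1 - u/2)^2 \<le> u^2/4" "(sqrt (1+u) - 1 - u/2)^2 \<le> u^4/4"
proof -
  define y where "y = sqrt (1+u)"
  have u1: "1+u \<ge> 0" using u by linarith
  have y0: "y \<ge> 0" unfolding y_def using u1 by simp
  have uy: "u = y^2 - 1" unfolding y_def using u1 by simp
  have f: "sqrt (1+u) - 1 - u/2 = -((y-1)^2/2)" unfolding y_def using u1
    by (simp add: power2_eq_square field_simps)
  have e1: "(sqrt(1+u)-1-u/2)^2 = ((y-1)^2)^2/4" unfolding f by (simp add: power2_eq_square)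
  have e2: "u = (y-1)*(y+1)" by (simp add: uy power2_eq_square algebra_simps)
  have a: "(y-1)^2 \<le> (y+1)^2" using y0 by (simp add: power2_eq_square algebra_simps)
  have "((y-1)^2)^2 \<le> ((y-1)*(y+1))^2"
  proof -
    have "((y-1)^2)^2 = (y-1)^2 * (y-1)^2" by (simp add: power2_eq_square)
    also have "\<dots> \<le> (y-1)^2 * (y+1)^2" by (rule mult_left_mono[OF a]) simp
    also have "\<dots> = ((y-1)*(y+1))^2" by (simp add: power_mult_distrib)
    finally show ?thesis .
  qed
  then show "(sqrt (1+u) - 1 - u/2)^2 \<le> u^2/4" unfolding e1 by (subst e2) simp
  have b: "1 \<le> (y+1)^2" using y0 by (simp add: power2_eq_square algebra_simps)
  have "((y-1)^2)^2 \<le> ((y-1)^2*(y+1)^2)^2"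
  proof -
    have "(y-1)^2 \<le> (y-1)^2*(y+1)^2" using b mult_left_mono[OF b, of "(y-1)^2"] by simp
    then show ?thesis by (rule power_mono) simp
  qed
  moreover have "u^4 = ((y-1)^2*(y+1)^2)^2" by (subst e2) (simp add: power_mult_distrib flip: power_mult)
  ultimately show "(sqrt (1+u) - 1 - u/2)^2 \<le> u^4/4" unfolding e1 by simp
qed

lemma mixture_density:
  assumes Q: "prob_space Q" and sets: "sets P = sets Q"
    and r: "r \<in> borel_measurable Q" "\<And>x. 0 \<le> r x"
    and Pd: "P = density Q (\<lambda>x. ennreal (r x))"
    and t: "t \<in> {0..1}"
  shows "mixture t Q P = density Q (\<lambda>x. ennreal (1 - t + t * r x))"
proof -
  let ?D = "density Q (\<lambda>x. ennreal (1 - t + t * r x))"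
  have "?D = measure_of (space ?D) (sets ?D) (emeasure ?D)" by (rule measure_of_of_measure[symmetric])
  also have "\<dots> = measure_of (space Q) (sets Q) (emeasure ?D)" by simp
  also have "\<dots> = mixture t Q P" unfolding mixture_def
  proof (rule measure_of_eq)
    show "sets Q \<subseteq> Pow (space Q)" by (rule sets.space_closed)
    fix A assume "A \<in> sigma_sets (space Q) (sets Q)"
    then have A[measurable]: "A \<in> sets Q" by (simp add: sets.sigma_sets_eq)
    have t0: "0 \<le> t" "0 \<le> 1 - t" using t by auto
    have "emeasure ?D A = (\<integral>\<^sup>+ x. ennreal (1 - t + t * r x) * indicator A x \<partial>Q)"
      by (rule emeasure_density) (use r in auto)
    also have "\<dots> = (\<integral>\<^sup>+ x. ennreal (1 - t) * indicator A x + ennreal t * (ennreal (r x) * indicator A x) \<partial>Q)"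
      using t0 r(2)
      by (intro nn_integral_cong) (simp add: ennreal_plus ennreal_mult distrib_right mult.assoc)
    also have "\<dots> = ennreal (1 - t) * emeasure Q A + ennreal t * (\<integral>\<^sup>+ x. ennreal (r x) * indicator A x \<partial>Q)"
      using r by (simp add: nn_integral_add nn_integral_cmult)
    also have "(\<integral>\<^sup>+ x. ennreal (r x) * indicator A x \<partial>Q) = emeasure P A"
      unfolding Pd by (rule emeasure_density[symmetric]) (use r in auto)
    finally show "emeasure ?D A = ennreal (1 - t) * emeasure Q A + ennreal t * emeasure P A" .
  qed
  finally show ?thesis ..
qed

lemma R_bounds:
  fixes t r :: real assumes t: "0 < t" "t \<le> 1" and r: "0 \<le> r"
  shows "(sqrt (1 - t + t * r) - 1 - t / 2 * (r - 1))^2 / t^2 \<le> (r-1)^2/4"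
    and "(sqrt (1 - t + t * r) - 1 - t / 2 * (r - 1))^2 / t^2 \<le> t^2 * (r-1)^4/4"
proof -
  define u where "u = t * (r - 1)"
  have "t * r \<ge> 0" using t r by simp
  then have u: "u \<ge> -1" unfolding u_def using t by (simp add: algebra_simps)
  have e: "sqrt (1 - t + t * r) - 1 - t / 2 * (r - 1) = sqrt (1+u) - 1 - u/2"
    unfolding u_def by (simp add: algebra_simps)
  have t2: "t^2 > 0" using t by simp
  show "(sqrt (1 - t + t * r) - 1 - t / 2 * (r - 1))^2 / t^2 \<le> (r-1)^2/4"
    unfolding e using sq_ineq(1)[OF u] t2
    by (simp add: divide_le_eq u_def power_mult_distrib mult.commute)
  show "(sqrt (1 - t + t * r) - 1 - t / 2 * (r - 1))^2 / t^2 \<le> t^2 * (r-1)^4/4"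
  proof -
    have "u^4/4 = t^2 * (r-1)^4/4 * t^2" unfolding u_def by (simp add: power_mult_distrib)
    then show ?thesis
      unfolding e using sq_ineq(2)[OF u] t2 by (simp add: divide_le_eq)
  qed
qed

lemma qmd_mixture:
  assumes Q: "prob_space Q" and sets: "sets P = sets Q"
    and r[measurable]: "r \<in> borel_measurable Q" and rnn: "\<And>x. 0 \<le> r x"
    and Pd: "P = density Q (\<lambda>x. ennreal (r x))"
    and L2: "integrable Q (\<lambda>x. (r x)^2)"
  shows "qmd_submodel Q (\<lambda>t. mixture t Q P) 1 (\<lambda>x. r x - 1)"
proof -
  interpret Q: prob_space Q by fact
  define p where "p = (\<lambda>t x. 1 - t + t * r x)"
  define R where "R = (\<lambda>t x. (sqrt (1 - t + t * r x) - 1 - t / 2 * (r x - 1))^2)"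
  have mix: "\<forall>t\<in>{0..1}. mixture t Q P = density Q (\<lambda>x. ennreal (p t x))"
    unfolding p_def using mixture_density[OF Q sets r rnn Pd] by blast
  have m0: "mixture 0 Q P = Q" using mix by (simp add: p_def density_1)
  have int1: "integrable Q (\<lambda>x. 2 * (r x)^2 + 2)"
    using L2 by (intro Bochner_Integration.integrable_add integrable_mult_right Q.integrable_const)
  have S2: "integrable Q (\<lambda>x. (r x - 1)^2)"
  proof (rule Bochner_Integration.integrable_bound[OF int1])
    show "(\<lambda>x. (r x - 1)\<^sup>2) \<in> borel_measurable Q" by measurable
    show "AE x in Q. norm ((r x - 1)\<^sup>2) \<le> norm (2 * (r x)\<^sup>2 + 2)"
    proof (intro AE_I2)
      fix x
      have h: "0 \<le> (r x + 1)^2" by simp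
      have "(r x - 1)^2 \<le> 2 * (r x)^2 + 2"
        using h zero_le_power2[of "r x"] unfolding power2_diff power2_sum power_one mult_1_right by linarith
      then show "norm ((r x - 1)\<^sup>2) \<le> norm (2 * (r x)\<^sup>2 + 2)" by simp
    qed
  qed
  have w_int: "integrable Q (\<lambda>x. (r x - 1)^2/4)" using S2 by simp
  have eqR: "\<And>t x. (sqrt (p t x) - sqrt (p 0 x) - t / 2 * (r x - 1) * sqrt (p 0 x))\<^sup>2 = R t x"
    by (simp add: p_def R_def)
  have Rmeas[measurable]: "\<And>t. R t \<in> borel_measurable Q" unfolding R_def by measurable
  have evint: "\<forall>\<^sub>F t in at_right 0. integrable Q
            (\<lambda>x. (sqrt (p t x) - sqrt (p 0 x) - t / 2 * (r x - 1) * sqrt (p 0 x))\<^sup>2)"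
    unfolding eqR eventually_at_right_field
  proof (intro exI[of _ 1] conjI allI impI)
    fix t :: real assume t: "0 < t" "t < 1"
    have wt: "integrable Q (\<lambda>x. t^2 * ((r x - 1)^2/4))" using integrable_mult_right[of "t^2" Q "\<lambda>x. (r x - 1)^2/4"] w_int by blast
    show "integrable Q (R t)"
    proof (rule Bochner_Integration.integrable_bound[OF wt])
      show "R t \<in> borel_measurable Q" by measurable
      show "AE x in Q. norm (R t x) \<le> norm (t\<^sup>2 * ((r x - 1)\<^sup>2 / 4))"
      proof (intro AE_I2)
        fix x
        have "R t x / t^2 \<le> (r x - 1)^2/4" unfolding R_def using R_bounds(1)[of t "r x"] t rnn[of x] by simp
        then have "R t x \<le> t\<^sup>2 * ((r x - 1)\<^sup>2 / 4)" using t by (simp add: divide_le_eq mult.commute)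
        moreover have "R t x \<ge> 0" unfolding R_def by simp
        ultimately show "norm (R t x) \<le> norm (t\<^sup>2 * ((r x - 1)\<^sup>2 / 4))" by simp
      qed
    qed
  qed simp
  have lim: "((\<lambda>t. (\<integral>x. R t x \<partial>Q) / t\<^sup>2) \<longlongrightarrow> 0) (at_right 0)"
    unfolding at_right_to_top filterlim_filtermap
  proof -
    define s where "s = (\<lambda>u x. R (inverse u) x * u^2)"
    have "((\<lambda>u. integral\<^sup>L Q (s u)) \<longlongrightarrow> integral\<^sup>L Q (\<lambda>x. 0::real)) at_top"
    proof (rule integral_dominated_convergence_at_top[where w="\<lambda>x. (r x - 1)^2/4"])
      show "(\<lambda>x. 0::real) \<in> borel_measurable Q" by simp
      show "\<And>u. s u \<in> borel_measurable Q" unfolding s_def by measurable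
      show "integrable Q (\<lambda>x. (r x - 1)^2/4)" by fact
      have bnd: "0 \<le> s u x \<and> s u x \<le> (r x - 1)^2/4 \<and> s u x \<le> (inverse u)^2 * (r x - 1)^4/4"
        if u: "1 \<le> u" for u x
      proof -
        have iu: "0 < inverse u" "inverse u \<le> 1" using u by (auto simp: inverse_le_1_iff)
        have e: "s u x = R (inverse u) x / (inverse u)^2"
          unfolding s_def using u by (simp add: power_inverse divide_inverse)
        show ?thesis unfolding e unfolding R_def
          using R_bounds[OF iu rnn[of x]] by simp
      qed
      show "\<forall>\<^sub>F u in at_top. AE x in Q. norm (s u x) \<le> (r x - 1)^2/4"
        using eventually_ge_at_top[of "1::real"]
        by eventually_elim (use bnd in auto)
      show "AE x in Q. ((\<lambda>u. s u x) \<longlongrightarrow> 0) at_top"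
      proof (intro AE_I2)
        fix x
        have l: "((\<lambda>u. (inverse u)^2 * (r x - 1)^4/4) \<longlongrightarrow> 0) at_top"
          using tendsto_mult_right[OF tendsto_power[OF tendsto_inverse_0_at_top[OF filterlim_ident], of 2], of "(r x - 1)^4/4"]
          by simp
        show "((\<lambda>u. s u x) \<longlongrightarrow> 0) at_top"
        proof (rule tendsto_sandwich[OF _ _ tendsto_const l])
          show "\<forall>\<^sub>F n in at_top. 0 \<le> s n x"
            using eventually_ge_at_top[of "1::real"] by eventually_elim (use bnd in auto)
          show "\<forall>\<^sub>F n in at_top. s n x \<le> (inverse n)\<^sup>2 * (r x - 1) ^ 4 / 4"
            using eventually_ge_at_top[of "1::real"] by eventually_elim (use bnd in auto)
        qed
      qed
    qed
    then have "((\<lambda>u. integral\<^sup>L Q (s u)) \<longlongrightarrow> 0) at_top" by simp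
    then show "((\<lambda>x. (\<integral>xa. R (inverse x) xa \<partial>Q) / (inverse x)\<^sup>2) \<longlongrightarrow> 0) at_top"
    proof (rule tendsto_cong[THEN iffD1, rotated])
      show "\<forall>\<^sub>F x in at_top. integral\<^sup>L Q (s x) = (\<integral>xa. R (inverse x) xa \<partial>Q) / (inverse x)\<^sup>2"
        using eventually_gt_at_top[of "0::real"]
        by eventually_elim (simp add: s_def power_inverse divide_inverse)
    qed
  qed
  show ?thesis
    unfolding qmd_submodel_def
  proof (intro conjI exI[of _ Q] exI[of _ p])
    show "mixture 0 Q P = Q" by fact
    show "(\<lambda>x. r x - 1) \<in> borel_measurable Q" by measurable
    show "integrable Q (\<lambda>x. (r x - 1)\<^sup>2)" by fact
    show "sigma_finite_measure Q" by unfold_locales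
    show "\<forall>t\<in>{0..1}. p t \<in> borel_measurable Q \<and> (\<forall>x\<in>space Q. 0 \<le> p t x) \<and>
      mixture t Q P = density Q (\<lambda>x. ennreal (p t x))"
    proof
      fix t :: real assume t: "t \<in> {0..1}"
      have "0 \<le> p t x" for x
      proof -
        have "0 \<le> t * r x" using t rnn[of x] by simp
        then show ?thesis unfolding p_def using t by simp
      qed
      then show "p t \<in> borel_measurable Q \<and> (\<forall>x\<in>space Q. 0 \<le> p t x) \<and>
        mixture t Q P = density Q (\<lambda>x. ennreal (p t x))"
        using mix t unfolding p_def by auto
    qed
    show "\<forall>\<^sub>F t in at_right 0. integrable Q
            (\<lambda>x. (sqrt (p t x) - sqrt (p 0 x) - t / 2 * (r x - 1) * sqrt (p 0 x))\<^sup>2)" by fact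
    show "((\<lambda>t. (\<integral>x. (sqrt (p t x) - sqrt (p 0 x) - t / 2 * (r x - 1) * sqrt (p 0 x))\<^sup>2 \<partial>Q) / t\<^sup>2) \<longlongrightarrow> 0) (at_right 0)"
      unfolding eqR by fact
  qed simp_all
qed

lemma mixture_path_zero:
  fixes IC :: "'x \<Rightarrow> real^'k" and \<theta> :: "'x measure \<Rightarrow> real^'k"
  assumes Q: "prob_space Q" and P: "prob_space P" and sets: "sets P = sets Q"
    and ac: "absolutely_continuous Q P"
    and L2: "integrable Q (\<lambda>x. (enn2real (RN_deriv Q P x))^2)"
    and path: "\<forall>t\<in>{0..1}. mixture t Q P \<in> M \<and> \<theta> (mixture t Q P) = \<theta> Q"
    and IC: "influence_curve M \<theta> Q IC"
  shows "(\<integral>x. IC x \<partial>P) = 0"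
proof -
  interpret Q: prob_space Q by fact
  interpret P: prob_space P by fact
  define r where "r = (\<lambda>x. enn2real (RN_deriv Q P x))"
  have r[measurable]: "r \<in> borel_measurable Q" unfolding r_def by measurable
  have rnn: "\<And>x. 0 \<le> r x" unfolding r_def by simp
  have "density Q (RN_deriv Q P) = P" by (rule Q.density_RN_deriv[OF ac sets])
  moreover have "density Q (\<lambda>x. ennreal (r x)) = density Q (RN_deriv Q P)"
  proof (rule density_cong)
    show "(\<lambda>x. ennreal (r x)) \<in> borel_measurable Q" by measurable
    show "RN_deriv Q P \<in> borel_measurable Q" by simp
    show "AE x in Q. ennreal (r x) = RN_deriv Q P x"
      using Q.RN_deriv_finite[OF P.sigma_finite_measure_axioms ac sets]
      by eventually_elim (simp add: r_def less_top)
  qed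
  ultimately have Pd: "P = density Q (\<lambda>x. ennreal (r x))" by simp
  have L2r: "integrable Q (\<lambda>x. (r x)^2)" using L2 unfolding r_def .
  have qmd: "qmd_submodel Q (\<lambda>t. mixture t Q P) 1 (\<lambda>x. r x - 1)"
    by (rule qmd_mixture[OF Q sets r rnn Pd L2r])
  from IC have ICm[measurable]: "IC \<in> borel_measurable Q"
    and IC2: "integrable Q (\<lambda>x. (norm (IC x))\<^sup>2)" and IC0: "(\<integral>x. IC x \<partial>Q) = 0"
    and der: "\<And>Pt e S. qmd_submodel Q Pt e S \<Longrightarrow> (\<forall>t\<in>{0..e}. Pt t \<in> M) \<Longrightarrow>
        ((\<lambda>t. \<theta> (Pt t)) has_vector_derivative (\<integral>x. S x *\<^sub>R IC x \<partial>Q)) (at 0 within {0..e})"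
    unfolding influence_curve_def by blast+
  have d1: "((\<lambda>t. \<theta> (mixture t Q P)) has_vector_derivative (\<integral>x. (r x - 1) *\<^sub>R IC x \<partial>Q)) (at 0 within {0..1})"
    using der[OF qmd] path by blast
  have d2: "((\<lambda>t. \<theta> (mixture t Q P)) has_vector_derivative 0) (at 0 within {0..1})"
  proof (rule has_vector_derivative_transform_within[OF has_vector_derivative_const[of "\<theta> Q"], of 1])
    show "\<And>x'. x' \<in> {0..1} \<Longrightarrow> dist x' 0 < 1 \<Longrightarrow> \<theta> Q = \<theta> (mixture x' Q P)"
      using path by auto
  qed auto
  have z: "(\<integral>x. (r x - 1) *\<^sub>R IC x \<partial>Q) = 0"
    using vector_derivative_unique_within_closed_interval[of 0 1 0 "\<lambda>t. \<theta> (mixture t Q P)"] d1 d2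
    by (simp add: cbox_interval)
  have intIC: "integrable Q IC"
  proof (rule Bochner_Integration.integrable_bound[OF Bochner_Integration.integrable_add[OF IC2 Q.integrable_const[of 1]]])
    show "AE x in Q. norm (IC x) \<le> norm ((norm (IC x))\<^sup>2 + 1)"
    proof (intro AE_I2)
      fix x
      have h: "0 \<le> (norm (IC x) - 1)^2" by simp
      have "norm (IC x) \<le> (norm (IC x))\<^sup>2 + 1"
        using h norm_ge_zero[of "IC x"] zero_le_power2[of "norm (IC x)"] unfolding power2_diff power_one mult_1_right by linarith
      then show "norm (IC x) \<le> norm ((norm (IC x))\<^sup>2 + 1)" by simp
    qed
  qed simp
  have intrIC: "integrable Q (\<lambda>x. r x *\<^sub>R IC x)"
  proof (rule Bochner_Integration.integrable_bound[OF Bochner_Integration.integrable_add[OF L2r IC2]])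
    show "AE x in Q. norm (r x *\<^sub>R IC x) \<le> norm ((r x)\<^sup>2 + (norm (IC x))\<^sup>2)"
    proof (intro AE_I2)
      fix x
      have h: "0 \<le> (r x - norm (IC x))^2" by simp
      have h2: "0 \<le> r x * norm (IC x)" using rnn[of x] by simp
      have "r x * norm (IC x) \<le> (r x)\<^sup>2 + (norm (IC x))\<^sup>2"
        using h h2 unfolding power2_diff by linarith
      then show "norm (r x *\<^sub>R IC x) \<le> norm ((r x)\<^sup>2 + (norm (IC x))\<^sup>2)"
        using rnn[of x] by simp
    qed
  qed simp
  have "(\<integral>x. IC x \<partial>P) = (\<integral>x. r x *\<^sub>R IC x \<partial>Q)"
    unfolding Pd by (rule integral_density) (use rnn in auto)
  also have "\<dots> = (\<integral>x. (r x - 1) *\<^sub>R IC x + IC x \<partial>Q)"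
    by (simp add: algebra_simps)
  also have "\<dots> = (\<integral>x. (r x - 1) *\<^sub>R IC x \<partial>Q) + (\<integral>x. IC x \<partial>Q)"
  proof (rule Bochner_Integration.integral_add[OF _ intIC])
    have "integrable Q (\<lambda>x. r x *\<^sub>R IC x - IC x)" using intrIC intIC by simp
    then show "integrable Q (\<lambda>x. (r x - 1) *\<^sub>R IC x)" by (simp add: algebra_simps)
  qed
  finally show ?thesis using z IC0 by simp
qed

theorem theorem1:
  fixes M :: "'x measure set"
    and \<theta> :: "'x measure \<Rightarrow> real^'k"
    and \<gamma>1 :: "'x measure \<Rightarrow> 'a"
    and \<gamma>2 :: "'x measure \<Rightarrow> 'b"
    and D :: "'x \<Rightarrow> real^'k \<Rightarrow> 'a \<Rightarrow> 'b \<Rightarrow> real^'k"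
  assumes laws: "\<forall>P\<in>M. prob_space P"
    and common_space: "\<forall>P\<in>M. \<forall>P'\<in>M. sets P' = sets P"
    and var_indep: "variation_independent M \<theta> \<gamma>1 \<gamma>2"
    and est: "estimating_function M \<theta> \<gamma>1 \<gamma>2 D"
    and IC: "\<forall>P\<in>M. influence_curve M \<theta> P (\<lambda>x. D x (\<theta> P) (\<gamma>1 P) (\<gamma>2 P))"
    and convex1: "\<forall>P\<in>M. convex_measures (section1 M \<theta> \<gamma>2 P)"
    and convex2: "\<forall>P\<in>M. convex_measures (section2 M \<theta> \<gamma>1 P)"
    and ac1: "\<forall>P\<in>M. mutually_ac_L2 (section1 M \<theta> \<gamma>2 P)"
    and ac2: "\<forall>P\<in>M. mutually_ac_L2 (section2 M \<theta> \<gamma>1 P)"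
  shows "doubly_robust M \<theta> \<gamma>1 \<gamma>2 D"
  unfolding doubly_robust_def
proof (intro conjI est ballI)
  fix P g1 g2 assume P: "P \<in> M" and g1: "g1 \<in> \<gamma>1 ` M" and g2: "g2 \<in> \<gamma>2 ` M"
  show "(\<integral>x. D x (\<theta> P) (\<gamma>1 P) g2 \<partial>P) = 0"
  proof -
    obtain P3 where P3: "P3 \<in> M" "g2 = \<gamma>2 P3" using g2 by blast
    obtain Q where Q: "Q \<in> M" "\<theta> Q = \<theta> P" "\<gamma>1 Q = \<gamma>1 P" "\<gamma>2 Q = \<gamma>2 P3"
      using var_indep P P3 unfolding variation_independent_def by blast
    have QS: "Q \<in> section2 M \<theta> \<gamma>1 Q" and PS: "P \<in> section2 M \<theta> \<gamma>1 Q"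
      using Q P unfolding section2_def by auto
    have path: "\<forall>t\<in>{0..1}. mixture t Q P \<in> M \<and> \<theta> (mixture t Q P) = \<theta> Q"
      using convex2 Q(1) QS PS unfolding convex_measures_def section2_def by blast
    have acL: "absolutely_continuous Q P" "integrable Q (\<lambda>x. (enn2real (RN_deriv Q P x))^2)"
      using ac2 Q(1) QS PS unfolding mutually_ac_L2_def by blast+
    have "(\<integral>x. D x (\<theta> Q) (\<gamma>1 Q) (\<gamma>2 Q) \<partial>P) = 0"
      by (rule mixture_path_zero[OF bspec[OF laws Q(1)] bspec[OF laws P] bspec[OF bspec[OF common_space Q(1)] P] acL path bspec[OF IC Q(1)]])
    then show ?thesis using Q P3 by simp
  qed
  show "(\<integral>x. D x (\<theta> P) g1 (\<gamma>2 P) \<partial>P) = 0"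
  proof -
    obtain P3 where P3: "P3 \<in> M" "g1 = \<gamma>1 P3" using g1 by blast
    obtain Q where Q: "Q \<in> M" "\<theta> Q = \<theta> P" "\<gamma>1 Q = \<gamma>1 P3" "\<gamma>2 Q = \<gamma>2 P"
      using var_indep P P3 unfolding variation_independent_def by blast
    have QS: "Q \<in> section1 M \<theta> \<gamma>2 Q" and PS: "P \<in> section1 M \<theta> \<gamma>2 Q"
      using Q P unfolding section1_def by auto
    have path: "\<forall>t\<in>{0..1}. mixture t Q P \<in> M \<and> \<theta> (mixture t Q P) = \<theta> Q"
      using convex1 Q(1) QS PS unfolding convex_measures_def section1_def by blast
    have acL: "absolutely_continuous Q P" "integrable Q (\<lambda>x. (enn2real (RN_deriv Q P x))^2)"
      using ac1 Q(1) QS PS unfolding mutually_ac_L2_def by blast+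
    have "(\<integral>x. D x (\<theta> Q) (\<gamma>1 Q) (\<gamma>2 Q) \<partial>P) = 0"
      by (rule mixture_path_zero[OF bspec[OF laws Q(1)] bspec[OF laws P] bspec[OF bspec[OF common_space Q(1)] P] acL path bspec[OF IC Q(1)]])
    then show ?thesis using Q P3 by simp
  qed
qed

end
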